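(* Let $G$ be a finitely generated group, let $N_1,N_2$ be normal subgroups of $G$ such that every element of $N_1$ commutes with every element of $N_2$, let $\Gamma_i=G/N_i$ ($i=1,2$), let $Q=G/N_1N_2$, and let $S$ be a non-abelian finite simple group. Then $$|\mathrm{Epi}(G,S)|=|\mathrm{Epi}(\Gamma_1,S)|+|\mathrm{Epi}(\Gamma_2,S)|-|\mathrm{Epi}(Q,S)|.$$
   Context: For a group $G$ and finite group $S$, $\mathrm{Epi}(G,S)$ denotes the set of surjective homomorphisms $G\to S$ (finite when $G$ is finitely generated). *)

theory Defs
  imports "HOL-Algebra.Algebra"
begin

text \<open>Epi(G,S): surjective homomorphisms from G onto S, as functions on the
carrier of G (extensional, so that distinct elements are distinct maps).\<close>
definition Epi :: "('a, 'c) monoid_scheme \<Rightarrow> ('b, 'd) monoid_scheme \<Rightarrow> ('a \<Rightarrow> 'b) set" where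
  "Epi G S = epi G S \<inter> extensional (carrier G)"

definition finitely_generated_group :: "('a, 'c) monoid_scheme \<Rightarrow> bool" where
  "finitely_generated_group G \<longleftrightarrow>
     (\<exists>A. finite A \<and> A \<subseteq> carrier G \<and> generate G A = carrier G)"

end

theory Submission
  imports Defs
begin


lemma hom_restrict_carrier:
  assumes "group G" "h \<in> hom G H" shows "restrict h (carrier G) \<in> hom G H"
proof -
  interpret group G by fact
  show ?thesis using assms(2) by (auto simp: hom_def Pi_def)
qed

lemma FactGroup_elem:
  "C \<in> carrier (G Mod N) \<Longrightarrow> (\<And>a. a \<in> carrier G \<Longrightarrow> C = N #>\<^bsub>G\<^esub> a \<Longrightarrow> P) \<Longrightarrow> P"
  by (auto simp: carrier_FactGroup)

lemma quot_card:
  fixes G :: "('a,'c) monoid_scheme" (structure) and S :: "('b,'d) monoid_scheme"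
  assumes G: "group G" and N: "N \<lhd> G" and S: "group S"
  shows "card (Epi (G Mod N) S) = card {\<phi> \<in> Epi G S. \<forall>n\<in>N. \<phi> n = \<one>\<^bsub>S\<^esub>}"
proof -
  interpret normal N G by fact
  interpret S: group S by fact
  define f :: "('a set \<Rightarrow> 'b) \<Rightarrow> 'a \<Rightarrow> 'b" where "f = (\<lambda>\<psi>. \<lambda>x\<in>carrier G. \<psi> (N #> x))"
  define g :: "('a \<Rightarrow> 'b) \<Rightarrow> 'a set \<Rightarrow> 'b" where "g = (\<lambda>\<phi>. \<lambda>C\<in>rcosets N. \<phi> (SOME x. x \<in> C))"
  have sub: "subgroup N G" by (rule is_subgroup)
  have QG: "group (G Mod N)" by (rule factorgroup_is_group)
  have carrQ: "carrier (G Mod N) = rcosets N" by (simp add: FactGroup_def)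
  have K: "\<phi> x = \<phi> a" if H: "\<phi> \<in> hom G S" "\<forall>n\<in>N. \<phi> n = \<one>\<^bsub>S\<^esub>" "a \<in> carrier G" "x \<in> N #> a" for \<phi> a x
  proof -
    obtain h where h: "h \<in> N" "x = h \<otimes> a" using H(4) unfolding r_coset_def by blast
    have hc: "h \<in> carrier G" by (rule subgroup.mem_carrier[OF sub h(1)])
    have "\<phi> x = \<phi> h \<otimes>\<^bsub>S\<^esub> \<phi> a" using hom_mult[OF H(1) hc H(3)] h(2) by (simp only:)
    also have "\<dots> = \<one>\<^bsub>S\<^esub> \<otimes>\<^bsub>S\<^esub> \<phi> a" using H(2) h(1) by (simp only:)
    also have "\<one>\<^bsub>S\<^esub> \<otimes>\<^bsub>S\<^esub> \<phi> a = \<phi> a" by (rule S.l_one[OF hom_in_carrier[OF H(1) H(3)]])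
    finally show ?thesis .
  qed
  have some: "(SOME x. x \<in> N #> a) \<in> N #> a" if "a \<in> carrier G" for a
    using rcos_self[OF that sub] by (meson someI)
  have someC: "(SOME x. x \<in> N #> a) \<in> carrier G" if "a \<in> carrier G" for a
    by (rule subsetD[OF r_coset_subset_G[OF subset that] some[OF that]])
  have gval: "g \<phi> (N #> a) = \<phi> a" if "\<phi> \<in> hom G S" "\<forall>n\<in>N. \<phi> n = \<one>\<^bsub>S\<^esub>" "a \<in> carrier G" for \<phi> a
    using K[OF that some[OF that(3)]] rcosetsI[OF subset that(3)] by (simp add: g_def)
  show ?thesis
  proof (rule bij_betw_same_card[of f], rule bij_betwI[where g=g])
    show "f \<in> Epi (G Mod N) S \<rightarrow> {\<phi> \<in> Epi G S. \<forall>n\<in>N. \<phi> n = \<one>\<^bsub>S\<^esub>}"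
    proof
      fix \<psi> assume "\<psi> \<in> Epi (G Mod N) S"
      then have p: "\<psi> \<in> hom (G Mod N) S" "\<psi> ` (rcosets N) = carrier S"
        by (auto simp: Epi_def epi_def carrQ)
      have fe: "f \<psi> = restrict (\<psi> \<circ> (\<lambda>a. N #> a)) (carrier G)" by (auto simp: f_def)
      have "f \<psi> \<in> hom G S" using hom_compose[OF r_coset_hom_Mod p(1)] by (simp add: f_def compose_def)
      moreover have "f \<psi> ` carrier G = carrier S"
      proof -
        have "f \<psi> ` carrier G = \<psi> ` ((\<lambda>a. N #> a) ` carrier G)" by (auto simp: f_def image_iff)
        also have "(\<lambda>a. N #> a) ` carrier G = rcosets N" using carrQ carrier_FactGroup by metis
        finally show ?thesis using p by simp
      qed
      moreover have "f \<psi> \<in> extensional (carrier G)" by (simp add: f_def)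
      moreover have "\<forall>n\<in>N. f \<psi> n = \<one>\<^bsub>S\<^esub>"
      proof
        fix n assume n: "n \<in> N"
        have "N #> n = N" by (rule subgroup.rcos_const[OF sub is_group n])
        moreover have "\<psi> (\<one>\<^bsub>G Mod N\<^esub>) = \<one>\<^bsub>S\<^esub>" using hom_one[OF p(1) QG S] .
        ultimately show "f \<psi> n = \<one>\<^bsub>S\<^esub>" using n subset by (auto simp: f_def)
      qed
      ultimately show "f \<psi> \<in> {\<phi> \<in> Epi G S. \<forall>n\<in>N. \<phi> n = \<one>\<^bsub>S\<^esub>}"
        by (simp add: Epi_def epi_def)
    qed
    show "g \<in> {\<phi> \<in> Epi G S. \<forall>n\<in>N. \<phi> n = \<one>\<^bsub>S\<^esub>} \<rightarrow> Epi (G Mod N) S"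
    proof
      fix \<phi> assume "\<phi> \<in> {\<phi> \<in> Epi G S. \<forall>n\<in>N. \<phi> n = \<one>\<^bsub>S\<^esub>}"
      then have p: "\<phi> \<in> hom G S" "\<phi> ` carrier G = carrier S" "\<forall>n\<in>N. \<phi> n = \<one>\<^bsub>S\<^esub>"
        by (auto simp: Epi_def epi_def)
      have "g \<phi> \<in> hom (G Mod N) S"
      proof (rule homI)
        fix C assume "C \<in> carrier (G Mod N)"
        then obtain a where a: "a \<in> carrier G" "C = N #> a" by (rule FactGroup_elem)
        show "g \<phi> C \<in> carrier S" using a gval[OF p(1,3) a(1)] hom_in_carrier[OF p(1)] by simp
      next
        fix C D assume CD: "C \<in> carrier (G Mod N)" "D \<in> carrier (G Mod N)"
        obtain a where a1: "a \<in> carrier G" "C = N #> a" using CD(1) by (rule FactGroup_elem)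
        obtain b where b1: "b \<in> carrier G" "D = N #> b" using CD(2) by (rule FactGroup_elem)
        note a = a1 b1
        have "C \<otimes>\<^bsub>G Mod N\<^esub> D = N #> (a \<otimes> b)" using a rcos_sum by simp
        then show "g \<phi> (C \<otimes>\<^bsub>G Mod N\<^esub> D) = g \<phi> C \<otimes>\<^bsub>S\<^esub> g \<phi> D"
          using a gval[OF p(1,3)] hom_mult[OF p(1)] by simp
      qed
      moreover have "g \<phi> ` carrier (G Mod N) = carrier S"
      proof -
        have "g \<phi> ` carrier (G Mod N) = g \<phi> ` ((\<lambda>a. N #> a) ` carrier G)" using carrier_FactGroup by metis
        also have "\<dots> = \<phi> ` carrier G" using gval[OF p(1,3)] by (auto simp: image_iff)
        finally show ?thesis using p by simp
      qed
      moreover have "g \<phi> \<in> extensional (carrier (G Mod N))" by (simp add: g_def carrQ)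
      ultimately show "g \<phi> \<in> Epi (G Mod N) S" by (simp add: Epi_def epi_def)
    qed
    show "g (f \<psi>) = \<psi>" if "\<psi> \<in> Epi (G Mod N) S" for \<psi>
    proof (rule extensionalityI[where A="rcosets N"])
      show "g (f \<psi>) \<in> extensional (rcosets N)" by (simp add: g_def)
      show "\<psi> \<in> extensional (rcosets N)" using that by (simp add: Epi_def carrQ)
      fix C assume "C \<in> rcosets N"
      then obtain a where a: "a \<in> carrier G" "C = N #> a" using carrQ by (metis FactGroup_elem)
      have "N #> (SOME x. x \<in> N #> a) = N #> a"
        using repr_independence[OF some[OF a(1)] a(1) sub] by simp
      then show "g (f \<psi>) C = \<psi> C" using a someC[OF a(1)] \<open>C \<in> rcosets N\<close> by (simp add: g_def f_def)
    qed
    show "f (g \<phi>) = \<phi>" if "\<phi> \<in> {\<phi> \<in> Epi G S. \<forall>n\<in>N. \<phi> n = \<one>\<^bsub>S\<^esub>}" for \<phi>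
    proof (rule extensionalityI[where A="carrier G"])
      have p: "\<phi> \<in> hom G S" "\<forall>n\<in>N. \<phi> n = \<one>\<^bsub>S\<^esub>" using that by (auto simp: Epi_def epi_def)
      show "f (g \<phi>) \<in> extensional (carrier G)" by (simp add: f_def)
      show "\<phi> \<in> extensional (carrier G)" using that by (simp add: Epi_def)
      fix x assume "x \<in> carrier G"
      then show "f (g \<phi>) x = \<phi> x" using gval[OF p] by (simp add: f_def)
    qed
  qed
qed


lemma hom_eq_on_generate:
  assumes G: "group G" and S: "group S" and p: "\<phi> \<in> hom G S" "\<psi> \<in> hom G S"
    and A: "A \<subseteq> carrier G" and eq: "\<forall>a\<in>A. \<phi> a = \<psi> a"
    and x: "x \<in> generate G A"
  shows "\<phi> x = \<psi> x"
  using x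
proof (induct x rule: generate.induct)
  case one
  then show ?case using hom_one[OF p(1) G S] hom_one[OF p(2) G S] by simp
next
  case (incl h)
  then show ?case using eq by simp
next
  case (inv h)
  have hc: "h \<in> carrier G" using inv A by auto
  have g1: "group_hom G S \<phi>" and g2: "group_hom G S \<psi>"
    using G S p by (auto simp: group_hom_def group_hom_axioms_def)
  show ?case using group_hom.hom_inv[OF g1 hc] group_hom.hom_inv[OF g2 hc] eq inv by simp
next
  case (eng h1 h2)
  have c: "h1 \<in> carrier G" "h2 \<in> carrier G"
    using group.generate_in_carrier[OF G A] eng by auto
  show ?case using hom_mult[OF p(1) c] hom_mult[OF p(2) c] eng by simp
qed

lemma finite_Epi:
  assumes G: "group G" and S: "group S" and fg: "finitely_generated_group G"
    and fS: "finite (carrier S)"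
  shows "finite (Epi G S)"
proof -
  obtain A where A: "finite A" "A \<subseteq> carrier G" "generate G A = carrier G"
    using fg unfolding finitely_generated_group_def by blast
  have inj: "inj_on (\<lambda>\<phi>. restrict \<phi> A) (Epi G S)"
  proof (rule inj_onI)
    fix \<phi> \<psi> assume a: "\<phi> \<in> Epi G S" "\<psi> \<in> Epi G S" "restrict \<phi> A = restrict \<psi> A"
    have h: "\<phi> \<in> hom G S" "\<psi> \<in> hom G S" using a by (auto simp: Epi_def epi_def)
    have eq: "\<forall>x\<in>A. \<phi> x = \<psi> x" using a(3) by (metis restrict_apply')
    show "\<phi> = \<psi>"
    proof (rule extensionalityI[where A="carrier G"])
      show "\<phi> \<in> extensional (carrier G)" "\<psi> \<in> extensional (carrier G)" using a by (auto simp: Epi_def)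
      fix x assume "x \<in> carrier G"
      then show "\<phi> x = \<psi> x" using hom_eq_on_generate[OF G S h A(2) eq] A(3) by auto
    qed
  qed
  have "(\<lambda>\<phi>. restrict \<phi> A) ` Epi G S \<subseteq> PiE A (\<lambda>_. carrier S)"
  proof
    fix r assume "r \<in> (\<lambda>\<phi>. restrict \<phi> A) ` Epi G S"
    then obtain \<phi> where "\<phi> \<in> Epi G S" "r = restrict \<phi> A" by auto
    then have "\<phi> \<in> hom G S" "r = restrict \<phi> A" by (auto simp: Epi_def epi_def)
    then show "r \<in> PiE A (\<lambda>_. carrier S)" using A(2) hom_in_carrier by fastforce
  qed
  moreover have "finite (PiE A (\<lambda>_. carrier S))" using A(1) fS by (simp add: finite_PiE)
  ultimately have "finite ((\<lambda>\<phi>. restrict \<phi> A) ` Epi G S)" by (rule finite_subset)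
  then show ?thesis using inj by (rule finite_imageD)
qed

theorem mainTheorem4:
  fixes G :: "('a, 'c) monoid_scheme" and S :: "('b, 'd) monoid_scheme"
    and N1 N2 :: "'a set"
  assumes "group G"
    and "finitely_generated_group G"
    and "N1 \<lhd> G" and "N2 \<lhd> G"
    and "\<forall>x\<in>N1. \<forall>y\<in>N2. x \<otimes>\<^bsub>G\<^esub> y = y \<otimes>\<^bsub>G\<^esub> x"
    and "simple_group S"
    and "finite (carrier S)"
    and "\<not> comm_group S"
  shows "int (card (Epi G S)) =
           int (card (Epi (G Mod N1) S)) + int (card (Epi (G Mod N2) S))
           - int (card (Epi (G Mod (N1 <#>\<^bsub>G\<^esub> N2)) S))"
proof -
  note G = assms(1) and N1 = assms(3) and N2 = assms(4) and comm = assms(5)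
  have S: "group S" using assms(6) by (simp add: simple_group_def)
  have simp_S: "\<And>H. H \<lhd> S \<Longrightarrow> H = carrier S \<or> H = {\<one>\<^bsub>S\<^esub>}"
    using simple_group.no_real_normal_subgroup[OF assms(6)] by blast
  define AN where "AN = (\<lambda>N. {\<phi> \<in> Epi G S. \<forall>n\<in>N. \<phi> n = \<one>\<^bsub>S\<^esub>})"
  have N12: "N1 <#>\<^bsub>G\<^esub> N2 \<lhd> G" by (rule group.normal_subgroup_set_mult_closed[OF G N1 N2])
  have fin: "finite (Epi G S)" by (rule finite_Epi[OF G S assms(2) assms(7)])
  have sub1: "N1 \<subseteq> carrier G" and sub2: "N2 \<subseteq> carrier G"
    using N1 N2 normal_imp_subgroup subgroup.subset by blast+
  have img: "\<phi> ` N \<lhd> S" if "\<phi> \<in> Epi G S" "N \<lhd> G" for \<phi> N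
  proof -
    have gh: "group_hom G S \<phi>" using G S that(1)
      by (auto simp: group_hom_def group_hom_axioms_def Epi_def epi_def)
    show ?thesis using normal.surj_hom_normal_subgroup[OF that(2) gh] that(1)
      by (auto simp: Epi_def epi_def)
  qed
  have U: "Epi G S = AN N1 \<union> AN N2"
  proof
    show "AN N1 \<union> AN N2 \<subseteq> Epi G S" by (auto simp: AN_def)
    show "Epi G S \<subseteq> AN N1 \<union> AN N2"
    proof
      fix \<phi> assume phi: "\<phi> \<in> Epi G S"
      have h: "\<phi> \<in> hom G S" and surj: "\<phi> ` carrier G = carrier S" using phi by (auto simp: Epi_def epi_def)
      show "\<phi> \<in> AN N1 \<union> AN N2"
      proof (rule ccontr)
        assume nin: "\<phi> \<notin> AN N1 \<union> AN N2"
        have "\<phi> ` N1 \<noteq> {\<one>\<^bsub>S\<^esub>}" using nin phi by (auto simp: AN_def)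
        then have i1: "\<phi> ` N1 = carrier S" using simp_S[OF img[OF phi N1]] by blast
        have "\<phi> ` N2 \<noteq> {\<one>\<^bsub>S\<^esub>}" using nin phi by (auto simp: AN_def)
        then have i2: "\<phi> ` N2 = carrier S" using simp_S[OF img[OF phi N2]] by blast
        have "comm_group S"
        proof (rule group.group_comm_groupI[OF S])
          fix x y assume xy: "x \<in> carrier S" "y \<in> carrier S"
          obtain a where a: "a \<in> N1" "x = \<phi> a" using xy(1) i1 by (metis imageE)
          obtain b where b: "b \<in> N2" "y = \<phi> b" using xy(2) i2 by (metis imageE)
          have ac: "a \<in> carrier G" "b \<in> carrier G" using a b sub1 sub2 by auto
          have "x \<otimes>\<^bsub>S\<^esub> y = \<phi> (a \<otimes>\<^bsub>G\<^esub> b)" using hom_mult[OF h ac] a b by simp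
          also have "\<dots> = \<phi> (b \<otimes>\<^bsub>G\<^esub> a)" using comm a(1) b(1) by metis
          also have "\<dots> = y \<otimes>\<^bsub>S\<^esub> x" using hom_mult[OF h ac(2) ac(1)] a b by simp
          finally show "x \<otimes>\<^bsub>S\<^esub> y = y \<otimes>\<^bsub>S\<^esub> x" .
        qed
        then show False using assms(8) by simp
      qed
    qed
  qed
  have I: "AN N1 \<inter> AN N2 = AN (N1 <#>\<^bsub>G\<^esub> N2)"
  proof
    show "AN N1 \<inter> AN N2 \<subseteq> AN (N1 <#>\<^bsub>G\<^esub> N2)"
    proof
      fix \<phi> assume phi: "\<phi> \<in> AN N1 \<inter> AN N2"
      then have e: "\<phi> \<in> Epi G S" "\<forall>n\<in>N1. \<phi> n = \<one>\<^bsub>S\<^esub>" "\<forall>n\<in>N2. \<phi> n = \<one>\<^bsub>S\<^esub>"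
        by (auto simp: AN_def)
      have h: "\<phi> \<in> hom G S" using e by (auto simp: Epi_def epi_def)
      have "\<forall>z\<in>N1 <#>\<^bsub>G\<^esub> N2. \<phi> z = \<one>\<^bsub>S\<^esub>"
      proof
        fix z assume "z \<in> N1 <#>\<^bsub>G\<^esub> N2"
        then obtain a b where ab: "a \<in> N1" "b \<in> N2" "z = a \<otimes>\<^bsub>G\<^esub> b"
          unfolding set_mult_def by auto
        have ac: "a \<in> carrier G" "b \<in> carrier G" using ab sub1 sub2 by auto
        show "\<phi> z = \<one>\<^bsub>S\<^esub>" using hom_mult[OF h ac] ab e monoid.l_one[OF group.is_monoid[OF S]] monoid.one_closed[OF group.is_monoid[OF S]] by simp
      qed
      then show "\<phi> \<in> AN (N1 <#>\<^bsub>G\<^esub> N2)" using e by (simp add: AN_def)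
    qed
    show "AN (N1 <#>\<^bsub>G\<^esub> N2) \<subseteq> AN N1 \<inter> AN N2"
    proof -
      have o1: "\<one>\<^bsub>G\<^esub> \<in> N1" "\<one>\<^bsub>G\<^esub> \<in> N2"
        using N1 N2 normal_imp_subgroup subgroup.one_closed by blast+
      have "N1 \<subseteq> N1 <#>\<^bsub>G\<^esub> N2"
      proof
        fix n assume n: "n \<in> N1"
        then have "n = n \<otimes>\<^bsub>G\<^esub> \<one>\<^bsub>G\<^esub>" using sub1 monoid.r_one[OF group.is_monoid[OF G]] by (metis subsetD)
        then show "n \<in> N1 <#>\<^bsub>G\<^esub> N2" using n o1 unfolding set_mult_def by blast
      qed
      moreover have "N2 \<subseteq> N1 <#>\<^bsub>G\<^esub> N2"
      proof
        fix n assume n: "n \<in> N2"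
        then have "n = \<one>\<^bsub>G\<^esub> \<otimes>\<^bsub>G\<^esub> n" using sub2 monoid.l_one[OF group.is_monoid[OF G]] by (metis subsetD)
        then show "n \<in> N1 <#>\<^bsub>G\<^esub> N2" using n o1 unfolding set_mult_def by blast
      qed
      ultimately show ?thesis by (auto simp: AN_def)
    qed
  qed
  have c1: "card (Epi (G Mod N1) S) = card (AN N1)" unfolding AN_def by (rule quot_card[OF G N1 S])
  have c2: "card (Epi (G Mod N2) S) = card (AN N2)" unfolding AN_def by (rule quot_card[OF G N2 S])
  have c3: "card (Epi (G Mod (N1 <#>\<^bsub>G\<^esub> N2)) S) = card (AN (N1 <#>\<^bsub>G\<^esub> N2))"
    unfolding AN_def by (rule quot_card[OF G N12 S])
  have f1: "finite (AN N1)" "finite (AN N2)" using fin by (auto simp: AN_def)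
  have "card (AN N1) + card (AN N2) = card (AN N1 \<union> AN N2) + card (AN N1 \<inter> AN N2)"
    by (rule card_Un_Int[OF f1])
  then show ?thesis using U I c1 c2 c3 by simp
qed

end
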